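(* The axioms I, II, III are mutually independent: for each $\mathsf X\in\{\mathrm I,\mathrm{II},\mathrm{III}\}$ there exists a pre-structural datum satisfying the two axioms other than $\mathsf X$ but failing $\mathsf X$. Moreover, the three subclauses (a), (b), (c) of Axiom III are mutually independent relative to Axioms I and II: for each of (a), (b), (c) there exists a pre-structural datum satisfying Axioms I and II and the other two subclauses of Axiom III, but failing that subclause.
   Context: For a nonempty set $X$, an algebra $\mathcal A\subseteq\mathcal P(X)$ contains $\varnothing,X$ and is closed under finite unions and complements. A finitely additive measure $\mu:\mathcal A\to[0,\infty)$ satisfies $\mu(\varnothing)=0$ and $\mu(B_1\sqcup B_2)=\mu(B_1)+\mu(B_2)$ for disjoint $B_1,B_2\in\mathcal A$. $\mathcal A\otimes\mathcal A$ denotes the algebra of subsets of $X\times X$ generated by rectangles $B_1\times B_2$ with $B_i\in\mathcal A$. For relations $H,K\subseteq X\times X$, $H\circ K=\{(x,z):\exists y\,(x,y)\in H,(y,z)\in K\}$. A pre-structural datum is a tuple $(X,\mathcal A,\mu,\mu^{\otimes2},R,I,\Pi_R,G,E_0,\eta)$ where: $X$ is a nonempty set; $\mathcal A$ is an algebra on $X$; $\mu$ is a finitely additive measure on $\mathcal A$; $\mu^{\otimes2}:\mathcal A\otimes\mathcal A\to[0,\infty)$ is finitely additive and satisfies $\mu^{\otimes2}(B_1\times B_2)=\mu(B_1)\mu(B_2)$ for all $B_1,B_2\in\mathcal A$; $R,I\in\mathcal A$ are disjoint; $\Pi_R:X\to R$ is a map; $G\subseteq X\times X$ with $G\in\mathcal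 A\otimes\mathcal A$; $E_0\in(0,\infty)$; $\eta\in[0,1]$. Axiom I: $\Pi_R\circ\Pi_R=\Pi_R$, $\Pi_R(r)=r$ for all $r\in R$, and $\Pi_R^{-1}(B)\in\mathcal A$ for every $B\in\mathcal A$ with $B\subseteq R$. Axiom II: $G$ is reflexive, symmetric, and $G\circ G=G$. Axiom III consists of: (a) conservation $\mu(R)+\mu(I)=E_0>0$; (b) projection–measure invariance $\mu(\Pi_R^{-1}(B))=\mu(B)$ for every $B\in\mathcal A$ with $B\subseteq R$; (c) coupling law: for all $B\in\mathcal A$, $\mu^{\otimes2}((B\times X)\cap G)=\mu(B)+\eta\,\mu^{\otimes2}((\Pi_R^{-1}(B)\times X)\cap G)$. *)

theory Defs
  imports "HOL-Analysis.Analysis"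
begin

definition fin_add_measure :: "'a set set \<Rightarrow> ('a set \<Rightarrow> real) \<Rightarrow> bool" where
  "fin_add_measure M m \<longleftrightarrow>
     (\<forall>B\<in>M. 0 \<le> m B) \<and> m {} = 0 \<and>
     (\<forall>B1\<in>M. \<forall>B2\<in>M. B1 \<inter> B2 = {} \<longrightarrow> m (B1 \<union> B2) = m B1 + m B2)"

definition prod_alg :: "'a set \<Rightarrow> 'a set set \<Rightarrow> ('a \<times> 'a) set set" where
  "prod_alg X A = \<Inter> {M. algebra (X \<times> X) M \<and>
      {B1 \<times> B2 | B1 B2. B1 \<in> A \<and> B2 \<in> A} \<subseteq> M}"

definition preim :: "'a set \<Rightarrow> ('a \<Rightarrow> 'a) \<Rightarrow> 'a set \<Rightarrow> 'a set" where
  "preim X P B = {x \<in> X. P x \<in> B}"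

definition pre_structural ::
  "'a set \<Rightarrow> 'a set set \<Rightarrow> ('a set \<Rightarrow> real) \<Rightarrow> (('a \<times> 'a) set \<Rightarrow> real) \<Rightarrow>
   'a set \<Rightarrow> 'a set \<Rightarrow> ('a \<Rightarrow> 'a) \<Rightarrow> ('a \<times> 'a) set \<Rightarrow> real \<Rightarrow> real \<Rightarrow> bool" where
  "pre_structural X A mu mu2 R I P G E0 eta \<longleftrightarrow>
     X \<noteq> {} \<and> algebra X A \<and> fin_add_measure A mu \<and>
     fin_add_measure (prod_alg X A) mu2 \<and>
     (\<forall>B1\<in>A. \<forall>B2\<in>A. mu2 (B1 \<times> B2) = mu B1 * mu B2) \<and>
     R \<in> A \<and> I \<in> A \<and> R \<inter> I = {} \<and>
     (\<forall>x\<in>X. P x \<in> R) \<and>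
     G \<subseteq> X \<times> X \<and> G \<in> prod_alg X A \<and>
     0 < E0 \<and> 0 \<le> eta \<and> eta \<le> 1"

definition axiom_I :: "'a set \<Rightarrow> 'a set set \<Rightarrow> 'a set \<Rightarrow> ('a \<Rightarrow> 'a) \<Rightarrow> bool" where
  "axiom_I X A R P \<longleftrightarrow>
     (\<forall>x\<in>X. P (P x) = P x) \<and> (\<forall>r\<in>R. P r = r) \<and>
     (\<forall>B\<in>A. B \<subseteq> R \<longrightarrow> preim X P B \<in> A)"

definition axiom_II :: "'a set \<Rightarrow> ('a \<times> 'a) set \<Rightarrow> bool" where
  "axiom_II X G \<longleftrightarrow> refl_on X G \<and> sym G \<and> G O G = G"

definition axiom_IIIa :: "('a set \<Rightarrow> real) \<Rightarrow> 'a set \<Rightarrow> 'a set \<Rightarrow> real \<Rightarrow> bool" where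
  "axiom_IIIa mu R I E0 \<longleftrightarrow> mu R + mu I = E0 \<and> E0 > 0"

text \<open>Axiom III (b): projection-measure invariance (the preimage is required to be
  measurable, so that its measure is defined).\<close>
definition axiom_IIIb :: "'a set \<Rightarrow> 'a set set \<Rightarrow> ('a set \<Rightarrow> real) \<Rightarrow> 'a set \<Rightarrow> ('a \<Rightarrow> 'a) \<Rightarrow> bool" where
  "axiom_IIIb X A mu R P \<longleftrightarrow>
     (\<forall>B\<in>A. B \<subseteq> R \<longrightarrow> preim X P B \<in> A \<and> mu (preim X P B) = mu B)"

definition axiom_IIIc ::
  "'a set \<Rightarrow> 'a set set \<Rightarrow> ('a set \<Rightarrow> real) \<Rightarrow> (('a \<times> 'a) set \<Rightarrow> real) \<Rightarrow>
   ('a \<Rightarrow> 'a) \<Rightarrow> ('a \<times> 'a) set \<Rightarrow> real \<Rightarrow> bool" where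
  "axiom_IIIc X A mu mu2 P G eta \<longleftrightarrow>
     (\<forall>B\<in>A. preim X P B \<in> A \<and>
        mu2 ((B \<times> X) \<inter> G) = mu B + eta * mu2 ((preim X P B \<times> X) \<inter> G))"

definition axiom_III where
  "axiom_III X A mu mu2 R I P G E0 eta \<longleftrightarrow>
     axiom_IIIa mu R I E0 \<and> axiom_IIIb X A mu R P \<and> axiom_IIIc X A mu mu2 P G eta"

end

theory Submission
  imports Defs
begin


lemma prod_alg_sub: "prod_alg X (Pow X) \<subseteq> Pow (X \<times> X)"
  unfolding prod_alg_def using algebra_Pow[of "X \<times> X"] by blast

lemma prod_alg_mem:
  assumes "finite G" "G \<subseteq> X \<times> X"
  shows "G \<in> prod_alg X (Pow X)"
  unfolding prod_alg_def
proof (rule InterI, clarify)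
  fix M assume alg: "algebra (X \<times> X) M" and rect: "{B1 \<times> B2 |B1 B2. B1 \<in> Pow X \<and> B2 \<in> Pow X} \<subseteq> M"
  interpret algebra "X \<times> X" M by (rule alg)
  show "G \<in> M" using assms
  proof (induction G rule: finite_induct)
    case empty then show ?case by simp
  next
    case (insert x F)
    obtain a b where x: "x = (a,b)" by force
    have "{a} \<subseteq> X" "{b} \<subseteq> X" using insert.prems x by auto
    then have "{a} \<times> {b} \<in> M" using rect by blast
    moreover have "F \<in> M" using insert by blast
    ultimately have "{a} \<times> {b} \<union> F \<in> M" by (rule Un)
    then show ?case using x by simp
  qed
qed

lemma fam_card: "finite X \<Longrightarrow> M \<subseteq> Pow X \<Longrightarrow> fin_add_measure M (\<lambda>B. real (card B))"
proof -
  assume f: "finite X" and M: "M \<subseteq> Pow X"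
  have "finite B" if "B \<in> M" for B using that M f by (meson PowD finite_subset subsetD)
  then show ?thesis unfolding fin_add_measure_def by (auto simp: card_Un_disjoint)
qed

definition XX :: "nat set" where "XX = {0,1}"

lemma ps:
  assumes "R \<subseteq> XX" "I \<subseteq> XX" "R \<inter> I = {}" "\<forall>x\<in>XX. P x \<in> R" "G \<subseteq> XX \<times> XX"
    "0 < E0" "0 \<le> eta" "eta \<le> 1"
  shows "pre_structural XX (Pow XX) (\<lambda>B. real (card B)) (\<lambda>B. real (card B)) R I P G E0 eta"
proof -
  have f: "finite XX" by (simp add: XX_def)
  have "finite G" using assms(5) f by (meson finite_SigmaI finite_subset)
  have pa: "prod_alg XX (Pow XX) \<subseteq> Pow (XX \<times> XX)" by (rule prod_alg_sub)
  have fm2: "fin_add_measure (prod_alg XX (Pow XX)) (\<lambda>B. real (card B))"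
    by (rule fam_card[OF _ pa]) (simp add: f)
  have fm1: "fin_add_measure (Pow XX) (\<lambda>B. real (card B))"
    by (rule fam_card[OF f order_refl])
  have pr: "\<forall>B1\<in>Pow XX. \<forall>B2\<in>Pow XX. real (card (B1 \<times> B2)) = real (card B1) * real (card B2)"
    by (simp add: card_cartesian_product)
  have G: "G \<in> prod_alg XX (Pow XX)" by (rule prod_alg_mem[OF \<open>finite G\<close> assms(5)])
  have ne: "XX \<noteq> {}" by (simp add: XX_def)
  note alg = algebra_Pow[of XX]
  show ?thesis unfolding pre_structural_def
    by (intro conjI; (fact | use assms in simp))
qed

lemma PowXX: "B \<in> Pow XX \<longleftrightarrow> B = {} \<or> B = {0} \<or> B = {1} \<or> B = {0,1}"
proof
  assume "B \<in> Pow XX"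
  then have s: "B \<subseteq> {0,1}" by (simp add: XX_def)
  show "B = {} \<or> B = {0} \<or> B = {1} \<or> B = {0,1}"
  proof (cases "0 \<in> B"; cases "1 \<in> B")
    assume "0 \<in> B" "1 \<in> B" then have "B = {0,1}" using s by blast then show ?thesis by blast
  next
    assume "0 \<in> B" "1 \<notin> B" then have "B = {0}" using s by blast then show ?thesis by blast
  next
    assume "0 \<notin> B" "1 \<in> B" then have "B = {1}" using s by blast then show ?thesis by blast
  next
    assume "0 \<notin> B" "1 \<notin> B" then have "B = {}" using s by blast then show ?thesis by blast
  qed
next
  assume "B = {} \<or> B = {0} \<or> B = {1} \<or> B = {0,1}"
  then show "B \<in> Pow XX" by (auto simp: XX_def)
qed

theorem theorem6p7:
  shows
  "\<comment> \<open>Axiom I is independent of II and III\<close>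
   (\<exists>(X::nat set) A mu mu2 R I P G E0 eta.
      pre_structural X A mu mu2 R I P G E0 eta \<and>
      \<not> axiom_I X A R P \<and> axiom_II X G \<and> axiom_III X A mu mu2 R I P G E0 eta) \<and>
   \<comment> \<open>Axiom II is independent of I and III\<close>
   (\<exists>(X::nat set) A mu mu2 R I P G E0 eta.
      pre_structural X A mu mu2 R I P G E0 eta \<and>
      axiom_I X A R P \<and> \<not> axiom_II X G \<and> axiom_III X A mu mu2 R I P G E0 eta) \<and>
   \<comment> \<open>Axiom III is independent of I and II\<close>
   (\<exists>(X::nat set) A mu mu2 R I P G E0 eta.
      pre_structural X A mu mu2 R I P G E0 eta \<and>
      axiom_I X A R P \<and> axiom_II X G \<and> \<not> axiom_III X A mu mu2 R I P G E0 eta) \<and>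
   \<comment> \<open>III(a) is independent of I, II, III(b), III(c)\<close>
   (\<exists>(X::nat set) A mu mu2 R I P G E0 eta.
      pre_structural X A mu mu2 R I P G E0 eta \<and>
      axiom_I X A R P \<and> axiom_II X G \<and>
      \<not> axiom_IIIa mu R I E0 \<and> axiom_IIIb X A mu R P \<and> axiom_IIIc X A mu mu2 P G eta) \<and>
   \<comment> \<open>III(b) is independent of I, II, III(a), III(c)\<close>
   (\<exists>(X::nat set) A mu mu2 R I P G E0 eta.
      pre_structural X A mu mu2 R I P G E0 eta \<and>
      axiom_I X A R P \<and> axiom_II X G \<and>
      axiom_IIIa mu R I E0 \<and> \<not> axiom_IIIb X A mu R P \<and> axiom_IIIc X A mu mu2 P G eta) \<and>
   \<comment> \<open>III(c) is independent of I, II, III(a), III(b)\<close>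
   (\<exists>(X::nat set) A mu mu2 R I P G E0 eta.
      pre_structural X A mu mu2 R I P G E0 eta \<and>
      axiom_I X A R P \<and> axiom_II X G \<and>
      axiom_IIIa mu R I E0 \<and> axiom_IIIb X A mu R P \<and> \<not> axiom_IIIc X A mu mu2 P G eta)"
  
proof -
  let ?mu = "\<lambda>B::nat set. real (card B)"
  let ?mu2 = "\<lambda>B::(nat\<times>nat) set. real (card B)"
  let ?D = "Id_on XX"
  have XXe: "XX = {0,1}" by (simp add: XX_def)
  have D: "?D = {(0,0),(1,1)}" unfolding XX_def by auto
  have II: "axiom_II XX ?D" unfolding axiom_II_def D XX_def by (auto simp: refl_on_def sym_def)
  have Iid: "axiom_I XX (Pow XX) XX id" unfolding axiom_I_def preim_def by auto
  have IIIc: "axiom_IIIc XX (Pow XX) ?mu ?mu2 P ?D 0" for P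
    unfolding axiom_IIIc_def
  proof (intro ballI conjI)
    fix B assume B: "B \<in> Pow XX"
    show "preim XX P B \<in> Pow XX" unfolding preim_def by auto
    have e: "(B \<times> XX) \<inter> ?D = (\<lambda>x. (x,x)) ` B" using B by auto
    have "card ((\<lambda>x. (x,x)) ` B) = card B" by (rule card_image) (auto simp: inj_on_def)
    then show "?mu2 ((B \<times> XX) \<inter> ?D) = ?mu B + 0 * ?mu2 ((preim XX P B \<times> XX) \<inter> ?D)"
      using e by simp
  qed
  have IIIbid: "axiom_IIIb XX (Pow XX) ?mu XX id" unfolding axiom_IIIb_def
  proof (intro ballI impI conjI)
    fix B assume "B \<in> Pow XX" "B \<subseteq> XX"
    then have "preim XX id B = B" unfolding preim_def by auto
    then show "?mu (preim XX id B) = ?mu B" by simp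
  qed (auto simp: preim_def)
  have IIIa2: "axiom_IIIa ?mu XX {} 2" unfolding axiom_IIIa_def XXe by simp
  have DXX: "?D \<subseteq> XX \<times> XX" by auto
  have ps0: "pre_structural XX (Pow XX) ?mu ?mu2 XX {} id ?D E0 eta" if "0 < E0" "0 \<le> eta" "eta \<le> 1" for E0 eta :: real
    by (rule ps) (use that in auto)
  let ?S = "\<lambda>x::nat. 1 - x"
  have c1: "pre_structural XX (Pow XX) ?mu ?mu2 XX {} ?S ?D 2 0 \<and>
      \<not> axiom_I XX (Pow XX) XX ?S \<and> axiom_II XX ?D \<and> axiom_III XX (Pow XX) ?mu ?mu2 XX {} ?S ?D 2 0"
  proof (intro conjI)
    show "pre_structural XX (Pow XX) ?mu ?mu2 XX {} ?S ?D 2 0" by (rule ps) (auto simp: XXe)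
    show "\<not> axiom_I XX (Pow XX) XX ?S" unfolding axiom_I_def XXe by auto
    have "axiom_IIIb XX (Pow XX) ?mu XX ?S" unfolding axiom_IIIb_def
    proof (intro ballI impI conjI)
      fix B assume "B \<in> Pow XX" "B \<subseteq> XX"
      then consider "B = {}" | "B = {0}" | "B = {1}" | "B = {0,1}" using PowXX by blast
      then show "?mu (preim XX ?S B) = ?mu B"
      proof cases
        case 1 then show ?thesis by (simp add: preim_def)
      next
        case 2 then have "preim XX ?S B = {1}" by (auto simp: preim_def XXe)
        then show ?thesis using 2 by simp
      next
        case 3 then have "preim XX ?S B = {0}" by (auto simp: preim_def XXe)
        then show ?thesis using 3 by simp
      next
        case 4 then have "preim XX ?S B = B" by (auto simp: preim_def XXe)
        then show ?thesis by simp
      qed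
    qed (auto simp: preim_def)
    then show "axiom_III XX (Pow XX) ?mu ?mu2 XX {} ?S ?D 2 0"
      unfolding axiom_III_def using IIIa2 IIIc by blast
  qed (rule II)
  let ?G = "{(0::nat,1::nat),(1,0)}"
  have c2: "pre_structural XX (Pow XX) ?mu ?mu2 XX {} id ?G 2 0 \<and>
      axiom_I XX (Pow XX) XX id \<and> \<not> axiom_II XX ?G \<and> axiom_III XX (Pow XX) ?mu ?mu2 XX {} id ?G 2 0"
  proof (intro conjI)
    show "pre_structural XX (Pow XX) ?mu ?mu2 XX {} id ?G 2 0" by (rule ps) (auto simp: XXe)
    show "\<not> axiom_II XX ?G" unfolding axiom_II_def XXe by (auto simp: refl_on_def)
    have "axiom_IIIc XX (Pow XX) ?mu ?mu2 id ?G 0" unfolding axiom_IIIc_def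
    proof (intro ballI conjI)
      fix B assume "B \<in> Pow XX"
      then consider "B = {}" | "B = {0}" | "B = {1}" | "B = {0,1}" using PowXX by blast
      then show "?mu2 ((B \<times> XX) \<inter> ?G) = ?mu B + 0 * ?mu2 ((preim XX id B \<times> XX) \<inter> ?G)"
      proof cases
        case 1 then show ?thesis by simp
      next
        case 2
        have "(B \<times> XX) \<inter> ?G = {(0,1)}" using 2 by (auto simp: XXe)
        then show ?thesis using 2 by simp
      next
        case 3
        have "(B \<times> XX) \<inter> ?G = {(1,0)}" using 3 by (auto simp: XXe)
        then show ?thesis using 3 by simp
      next
        case 4
        have "(B \<times> XX) \<inter> ?G = ?G" using 4 by (auto simp: XXe)
        then show ?thesis using 4 by simp
      qed
    qed (auto simp: preim_def)
    then show "axiom_III XX (Pow XX) ?mu ?mu2 XX {} id ?G 2 0"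
      unfolding axiom_III_def using IIIa2 IIIbid by blast
  qed (rule Iid)
  have c3: "pre_structural XX (Pow XX) ?mu ?mu2 XX {} id ?D 3 0 \<and>
      axiom_I XX (Pow XX) XX id \<and> axiom_II XX ?D \<and> \<not> axiom_IIIa ?mu XX {} 3 \<and>
      axiom_IIIb XX (Pow XX) ?mu XX id \<and> axiom_IIIc XX (Pow XX) ?mu ?mu2 id ?D 0"
    using ps0[of 3 0] Iid II IIIbid IIIc[of id] by (simp add: axiom_IIIa_def XXe)
  let ?K = "\<lambda>x::nat. 0::nat"
  have c5: "pre_structural XX (Pow XX) ?mu ?mu2 {0} {1} ?K ?D 2 0 \<and>
      axiom_I XX (Pow XX) {0} ?K \<and> axiom_II XX ?D \<and> axiom_IIIa ?mu {0} {1} 2 \<and>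
      \<not> axiom_IIIb XX (Pow XX) ?mu {0} ?K \<and> axiom_IIIc XX (Pow XX) ?mu ?mu2 ?K ?D 0"
  proof (intro conjI)
    show "pre_structural XX (Pow XX) ?mu ?mu2 {0} {1} ?K ?D 2 0" by (rule ps) (auto simp: XXe)
    show "axiom_I XX (Pow XX) {0} ?K" unfolding axiom_I_def preim_def by auto
    show "axiom_IIIa ?mu {0} {1} 2" unfolding axiom_IIIa_def by simp
    have "preim XX ?K {0} = XX" unfolding preim_def by auto
    then have ne: "?mu (preim XX ?K {0}) \<noteq> ?mu {0}" by (simp add: XXe)
    have h: "{0::nat} \<in> Pow XX" by (simp add: XXe)
    show "\<not> axiom_IIIb XX (Pow XX) ?mu {0} ?K" unfolding axiom_IIIb_def
      using ne h by blast
  qed (rule II, rule IIIc)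
  have c6: "pre_structural XX (Pow XX) ?mu ?mu2 XX {} id ?D 2 (1/2) \<and>
      axiom_I XX (Pow XX) XX id \<and> axiom_II XX ?D \<and> axiom_IIIa ?mu XX {} 2 \<and>
      axiom_IIIb XX (Pow XX) ?mu XX id \<and> \<not> axiom_IIIc XX (Pow XX) ?mu ?mu2 id ?D (1/2)"
  proof (intro conjI)
    show "pre_structural XX (Pow XX) ?mu ?mu2 XX {} id ?D 2 (1/2)" by (rule ps0) auto
    have "preim XX id XX = XX" unfolding preim_def by auto
    moreover have "(XX \<times> XX) \<inter> ?D = ?D" by auto
    moreover have "card ?D = 2" unfolding D by simp
    moreover have "card XX = 2" by (simp add: XXe)
    ultimately have ne: "?mu2 ((XX \<times> XX) \<inter> ?D) \<noteq> ?mu XX + 1/2 * ?mu2 ((preim XX id XX \<times> XX) \<inter> ?D)"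
      by simp
    have h: "XX \<in> Pow XX" by simp
    show "\<not> axiom_IIIc XX (Pow XX) ?mu ?mu2 id ?D (1/2)" unfolding axiom_IIIc_def
      using ne h by blast
  qed (rule Iid, rule II, rule IIIa2, rule IIIbid)
  have c3': "pre_structural XX (Pow XX) ?mu ?mu2 XX {} id ?D 3 0 \<and>
      axiom_I XX (Pow XX) XX id \<and> axiom_II XX ?D \<and> \<not> axiom_III XX (Pow XX) ?mu ?mu2 XX {} id ?D 3 0"
    using c3 unfolding axiom_III_def by blast
  show ?thesis
    apply (intro conjI)
    subgoal by (intro exI) (rule c1)
    subgoal by (intro exI) (rule c2)
    subgoal by (intro exI) (rule c3')
    subgoal by (intro exI) (rule c3)
    subgoal by (intro exI) (rule c5)
    subgoal by (intro exI) (rule c6)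
    done
qed

end
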